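(* Let $\mathbf{X}=\mathbf{D}_1\boldsymbol{\Gamma}_1$ with $\boldsymbol{\Gamma}_1\neq 0$, and $\mathbf{Y}=\mathbf{X}+\mathbf{E}$ with $\|\mathbf{E}\|_{2,\infty}^{p}\le\epsilon_0$. Let $|\Gamma_1^{\min}|$ and $|\Gamma_1^{\max}|$ be the smallest and largest absolute values of the nonzero entries of $\boldsymbol{\Gamma}_1$. Let $\hat{\boldsymbol{\Gamma}}_1=\mathcal{H}_{\beta_1}(\mathbf{D}_1^T\mathbf{Y})$. Assume (a) $\|\boldsymbol{\Gamma}_1\|_{0,\infty}^{s}<\tfrac12\Big(1+\tfrac{1}{\mu(\mathbf{D}_1)}\tfrac{|\Gamma_1^{\min}|}{|\Gamma_1^{\max}|}\Big)-\tfrac{1}{\mu(\mathbf{D}_1)}\tfrac{\epsilon_0}{|\Gamma_1^{\max}|}$; and (b) $|\Gamma_1^{\min}|-(\|\boldsymbol{\Gamma}_1\|_{0,\infty}^{s}-1)\mu(\mathbf{D}_1)|\Gamma_1^{\max}|-\epsilon_0>\beta_1>\|\boldsymbol{\Gamma}_1\|_{0,\infty}^{s}\mu(\mathbf{D}_1)|\Gamma_1^{\max}|+\epsilon_0$. Then (1) the support of $\hat{\boldsymbol{\Gamma}}_1$ equals the support of $\boldsymbol{\Gamma}_1$; and (2) $\|\boldsymbol{\Gamma}_1-\hat{\boldsymbol{\Gamma}}_1\|_{2,\infty}^{p}\le\sqrt{\|\boldsymbol{\Gamma}_1\|_{0,\infty}^{p}}\,\big(\epsilon_0+\mu(\mathb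f{D}_1)(\|\boldsymbol{\Gamma}_1\|_{0,\infty}^{s}-1)|\Gamma_1^{\max}|\big)$.
   Context: Setting. Signals are one-dimensional of length $N$ with periodic boundary conditions; $m_0=1$, $\boldsymbol{\Gamma}_0=\mathbf{X}$. For $i\ge1$, $\boldsymbol{\Gamma}_i\in\mathbb{R}^{Nm_i}$ has entry $km_i+r$ equal to the coefficient of filter $r$ at spatial shift $k$. $\mathbf{D}_i\in\mathbb{R}^{Nm_{i-1}\times Nm_i}$ is a (stride) convolutional dictionary whose column $km_i+r$ is local filter $r$ (length $n_{i-1}m_{i-1}$) placed cyclically on entries $km_{i-1},\dots,km_{i-1}+n_{i-1}m_{i-1}-1$, zero elsewhere; in particular $\mathbf{D}_1\in\mathbb{R}^{N\times Nm_1}$ consists of all cyclic shifts of $m_1$ filters of length $n_0$. Columns have unit $\ell_2$ norm; $\mu(\mathbf{D})=\max_{i\neq j}|\mathbf{d}_i^T\mathbf{d}_j|$. Stripes: $\mathbf{S}_{i,j}\boldsymbol{\Gamma}_i$ is the subvector of $\boldsymbol{\Gamma}_i$ at spatial shifts $k\in\{j-n_{i-1}+1,\dots,j+n_{i-1}-1\}$ (mod $N$), all channels (length $(2n_{i-1}-1)m_i$); $\|\boldsymbol{\Gamma}_i\|_{0,\infty}^{s}=\max_j\|\mathbf{S}_{i,j}\boldsymbol{\Gamma}_i\|_0$. Patches: for $i\ge0$, $\mathbf{P}_{i,j}\mathbf{V}$ extracts from $\mathbf{V}\in\mathbb{R}^{Nm_i}$ the cyclically contiguous subvector of length $n_im_i$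 at spatial shifts $j,\dots,j+n_i-1$ (all channels). $\|\mathbf{V}\|_{2,\infty}^{p}=\max_j\|\mathbf{P}_{i,j}\mathbf{V}\|_2$ and $\|\mathbf{V}\|_{0,\infty}^{p}=\max_j\|\mathbf{P}_{i,j}\mathbf{V}\|_0$ (for $\mathbf{E}\in\mathbb{R}^N$ patches have length $n_0$; for $\boldsymbol{\Gamma}_1$ they have length $n_1m_1$). Hard thresholding: $\mathcal{H}_\beta$ acts entrywise, $\mathcal{H}_\beta(z)=z$ if $|z|>\beta$ and $0$ otherwise. *)

theory Defs
  imports Complex_Main
begin

text \<open>Vectors are functions nat => real; a vector of \<open>N\<close> spatial positions with
  \<open>m\<close> channels uses the flat indices \<open>k*m + r\<close> with \<open>k < N\<close>, \<open>r < m\<close>.\<close>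

definition chan_idx :: "nat \<Rightarrow> nat set \<Rightarrow> nat set" where
  "chan_idx m S = {k * m + r | k r. k \<in> S \<and> r < m}"

definition patch_idx :: "nat \<Rightarrow> nat \<Rightarrow> nat \<Rightarrow> nat \<Rightarrow> nat set" where
  "patch_idx N m n j = chan_idx m ((\<lambda>t. (j + t) mod N) ` {..<n})"

definition stripe_idx :: "nat \<Rightarrow> nat \<Rightarrow> nat \<Rightarrow> nat \<Rightarrow> nat set" where
  "stripe_idx N m n0 j =
     chan_idx m ((\<lambda>t. nat ((int j + t) mod int N)) ` {-(int n0 - 1) .. int n0 - 1})"

definition norm0_inf_stripe :: "nat \<Rightarrow> nat \<Rightarrow> nat \<Rightarrow> (nat \<Rightarrow> real) \<Rightarrow> nat" where
  "norm0_inf_stripe N m n0 v = Max ((\<lambda>j. card {a \<in> stripe_idx N m n0 j. v a \<noteq> 0}) ` {..<N})"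

definition norm0_inf_patch :: "nat \<Rightarrow> nat \<Rightarrow> nat \<Rightarrow> (nat \<Rightarrow> real) \<Rightarrow> nat" where
  "norm0_inf_patch N m n v = Max ((\<lambda>j. card {a \<in> patch_idx N m n j. v a \<noteq> 0}) ` {..<N})"

definition norm2_inf_patch :: "nat \<Rightarrow> nat \<Rightarrow> nat \<Rightarrow> (nat \<Rightarrow> real) \<Rightarrow> real" where
  "norm2_inf_patch N m n v = Max ((\<lambda>j. sqrt (\<Sum>a\<in>patch_idx N m n j. (v a)\<^sup>2)) ` {..<N})"

text \<open>Convolutional dictionary D_1 (N x N*m1): column k*m1+r is filter r
  (f r t, t < n0) placed cyclically on entries k, ..., k+n0-1 (mod N).\<close>
definition conv_dict :: "nat \<Rightarrow> nat \<Rightarrow> nat \<Rightarrow> (nat \<Rightarrow> nat \<Rightarrow> real) \<Rightarrow> nat \<Rightarrow> nat \<Rightarrow> real" where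
  "conv_dict N n0 m1 f i a =
     (let k = a div m1; r = a mod m1; t = (i + N - k) mod N
      in if t < n0 then f r t else 0)"

definition mat_vec :: "nat \<Rightarrow> (nat \<Rightarrow> nat \<Rightarrow> real) \<Rightarrow> (nat \<Rightarrow> real) \<Rightarrow> nat \<Rightarrow> real" where
  "mat_vec ncols D v i = (\<Sum>a<ncols. D i a * v a)"

definition matT_vec :: "nat \<Rightarrow> (nat \<Rightarrow> nat \<Rightarrow> real) \<Rightarrow> (nat \<Rightarrow> real) \<Rightarrow> nat \<Rightarrow> real" where
  "matT_vec nrows D v a = (\<Sum>i<nrows. D i a * v i)"

definition coherence :: "nat \<Rightarrow> nat \<Rightarrow> (nat \<Rightarrow> nat \<Rightarrow> real) \<Rightarrow> real" where
  "coherence nrows ncols D = Max (insert 0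
     {\<bar>\<Sum>i<nrows. D i a * D i b\<bar> | a b. a < ncols \<and> b < ncols \<and> a \<noteq> b})"

definition hard_thr :: "real \<Rightarrow> (nat \<Rightarrow> real) \<Rightarrow> nat \<Rightarrow> real" where
  "hard_thr \<beta> v a = (if \<bar>v a\<bar> > \<beta> then v a else 0)"

end

theory Submission
  imports Defs "HOL-Analysis.Convex"
begin


lemma chan_idx_1[simp]: "chan_idx 1 S = S"
  unfolding chan_idx_def by auto

lemma mod_back: assumes "k < (N::nat)" "i < N" shows "(k + (i + N - k) mod N) mod N = i"
proof -
  have "(k + (i + N - k) mod N) mod N = (k + (i + N - k)) mod N" by (simp add: mod_add_right_eq)
  also have "k + (i + N - k) = i + N" using assms by simp
  finally show ?thesis using assms by simp
qed

lemma stripe_mem: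
  assumes "n0 \<le> N" "0 < m1" "a < N*m1" "b < N*m1" "i < N"
    and "conv_dict N n0 m1 f i a \<noteq> 0" "conv_dict N n0 m1 f i b \<noteq> 0"
  shows "b \<in> stripe_idx N m1 n0 (a div m1)"
proof -
  define ka kb where "ka = a div m1" and "kb = b div m1"
  define t t' where "t = (i + N - ka) mod N" and "t' = (i + N - kb) mod N"
  have ka: "ka < N" using assms(2,3) unfolding ka_def by (simp add: less_mult_imp_div_less)
  have kb: "kb < N" using assms(2,4) unfolding kb_def by (simp add: less_mult_imp_div_less)
  have tt: "t < n0" "t' < n0" using assms(6,7) unfolding conv_dict_def t_def t'_def ka_def kb_def Let_def
    by (auto split: if_splits)
  have e1: "(ka + t) mod N = i" using mod_back[OF ka assms(5)] t_def by simp
  have e2: "(kb + t') mod N = i" using mod_back[OF kb assms(5)] t'_def by simp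
  have "(int ka + int t) mod int N = (int kb + int t') mod int N"
    using e1 e2 by (metis of_nat_add zmod_int)
  hence "(int ka + (int t - int t')) mod int N = (int kb) mod int N"
    by (metis (no_types, opaque_lifting) add.commute add_diff_cancel_left' diff_add_eq mod_diff_left_eq)
  hence "(int ka + (int t - int t')) mod int N = int kb" using kb by simp
  hence kbeq: "kb = nat ((int ka + (int t - int t')) mod int N)" by simp
  have rng: "int t - int t' \<in> {-(int n0 - 1) .. int n0 - 1}" using tt by auto
  have "b = kb * m1 + b mod m1" unfolding kb_def by simp
  moreover have "kb \<in> (\<lambda>t. nat ((int ka + t) mod int N)) ` {-(int n0 - 1) .. int n0 - 1}"
    using kbeq rng by blast
  ultimately show ?thesis unfolding stripe_idx_def chan_idx_def ka_def[symmetric]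
    using assms(2) by (simp only: mem_Collect_eq) (metis mod_less_divisor)
qed



lemma noise_bound:
  assumes "1 \<le> n0" "n0 \<le> N" "0 < m1" "a < N*m1"
    and unit: "(\<Sum>i<N. (conv_dict N n0 m1 f i a)\<^sup>2) = 1"
    and noise: "norm2_inf_patch N 1 n0 E \<le> eps0"
  shows "\<bar>\<Sum>i<N. conv_dict N n0 m1 f i a * E i\<bar> \<le> eps0"
proof -
  define D where "D = conv_dict N n0 m1 f"
  define k where "k = a div m1"
  define P where "P = (\<lambda>t. (k + t) mod N) ` {..<n0}"
  have kN: "k < N" using assms unfolding k_def by (simp add: less_mult_imp_div_less)
  have PN: "P \<subseteq> {..<N}" unfolding P_def using kN by auto
  have z: "D i a = 0" if "i \<in> {..<N} - P" for i
  proof (rule ccontr)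
    assume nz: "D i a \<noteq> 0"
    have "(i + N - k) mod N < n0" using nz unfolding D_def conv_dict_def Let_def k_def
      by (auto split: if_splits)
    moreover have "(k + (i + N - k) mod N) mod N = i" using mod_back[OF kN] that by simp
    ultimately have "i \<in> P" unfolding P_def by force
    thus False using that by simp
  qed
  have s1: "(\<Sum>i<N. D i a * E i) = (\<Sum>i\<in>P. D i a * E i)"
    by (rule sum.mono_neutral_right) (use PN z in auto)
  have s2: "(\<Sum>i\<in>P. (D i a)\<^sup>2) = 1"
    using unit unfolding D_def[symmetric]
    by (metis (no_types, lifting) PN z finite_lessThan power_zero_numeral sum.mono_neutral_right)
  have cs: "(\<Sum>i\<in>P. D i a * E i)\<^sup>2 \<le> (\<Sum>i\<in>P. (E i)\<^sup>2)"
    using Cauchy_Schwarz_ineq_sum[of "\<lambda>i. D i a" E P] s2 by simp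
  have "\<bar>\<Sum>i\<in>P. D i a * E i\<bar> \<le> sqrt (\<Sum>i\<in>P. (E i)\<^sup>2)"
    using cs real_le_rsqrt by (metis abs_le_square_iff abs_of_nonneg real_sqrt_abs real_sqrt_le_mono sqrt_ge_absD)
  also have "\<dots> \<le> norm2_inf_patch N 1 n0 E"
    unfolding norm2_inf_patch_def patch_idx_def chan_idx_1 P_def[symmetric] k_def[symmetric]
    by (rule Max_ge) (use kN in \<open>auto simp: P_def\<close>)
  finally show ?thesis using s1 noise unfolding D_def by simp
qed

lemma coh_bound:
  assumes "a < M" "b < M" "a \<noteq> b"
  shows "\<bar>\<Sum>i<N. D i a * D i b\<bar> \<le> coherence N M D"
proof -
  have fin: "finite {\<bar>\<Sum>i<N. D i a * D i b\<bar> | a b. a < M \<and> b < M \<and> a \<noteq> b}"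
    by (rule finite_subset[of _ "(\<lambda>(a,b). \<bar>\<Sum>i<N. D i a * D i b\<bar>) ` ({..<M} \<times> {..<M})"]) auto
  show ?thesis unfolding coherence_def
    by (rule Max_ge) (use fin assms in auto)
qed

lemma coh_nonneg: "0 \<le> coherence N M D"
proof -
  have fin: "finite {\<bar>\<Sum>i<N. D i a * D i b\<bar> | a b. a < M \<and> b < M \<and> a \<noteq> b}"
    by (rule finite_subset[of _ "(\<lambda>(a,b). \<bar>\<Sum>i<N. D i a * D i b\<bar>) ` ({..<M} \<times> {..<M})"]) auto
  show ?thesis unfolding coherence_def
    by (rule Max_ge) (use fin in auto)
qed

lemma est_decomp:
  assumes "a < M" and unit: "(\<Sum>i<N. (D i a)\<^sup>2) = 1"
  shows "matT_vec N D (\<lambda>i. mat_vec M D G i + E i) a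
     = G a + (\<Sum>b\<in>{..<M}-{a}. (\<Sum>i<N. D i a * D i b) * G b) + (\<Sum>i<N. D i a * E i)"
proof -
  have "matT_vec N D (\<lambda>i. mat_vec M D G i + E i) a
      = (\<Sum>i<N. \<Sum>b<M. D i a * D i b * G b) + (\<Sum>i<N. D i a * E i)"
    unfolding matT_vec_def mat_vec_def
    by (simp add: distrib_left sum.distrib sum_distrib_left mult.assoc)
  also have "(\<Sum>i<N. \<Sum>b<M. D i a * D i b * G b) = (\<Sum>b<M. (\<Sum>i<N. D i a * D i b) * G b)"
    by (subst sum.swap) (simp add: sum_distrib_right)
  also have "\<dots> = (\<Sum>i<N. D i a * D i a) * G a + (\<Sum>b\<in>{..<M}-{a}. (\<Sum>i<N. D i a * D i b) * G b)"
    using assms(1) by (subst sum.remove[of _ a]) auto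
  also have "(\<Sum>i<N. D i a * D i a) = 1" using unit by (simp add: power2_eq_square)
  finally show ?thesis by simp
qed



lemma lt_block: "k < (N::nat) \<Longrightarrow> r < m \<Longrightarrow> k*m + r < N*m"
proof -
  assume "k < N" "r < m"
  hence "k*m + r < k*m + m" by simp
  also have "\<dots> = Suc k * m" by simp
  also have "\<dots> \<le> N * m" using \<open>k<N\<close> by (intro mult_right_mono) auto
  finally show ?thesis .
qed

lemma stripe_sub: "0 < N \<Longrightarrow> stripe_idx N m1 n0 j \<subseteq> {..<N*m1}"
  unfolding stripe_idx_def chan_idx_def
proof clarsimp
  fix x r assume "0 < N" "r < m1"
  have "nat ((int j + x) mod int N) < N" using \<open>0<N\<close>
    by (metis int_ops(1) less_imp_of_nat_less nat_less_iff pos_mod_bound pos_mod_sign)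
  thus "nat ((int j + x) mod int N) * m1 + r < N * m1" using lt_block \<open>r<m1\<close> by blast
qed

lemma patch_sub: "0 < N \<Longrightarrow> patch_idx N m n j \<subseteq> {..<N*m}"
  unfolding patch_idx_def chan_idx_def using lt_block by auto

lemma finite_chan: "finite S \<Longrightarrow> finite (chan_idx m S)"
proof -
  assume "finite S"
  have "chan_idx m S = (\<lambda>(k,r). k*m+r) ` (S \<times> {..<m})" unfolding chan_idx_def by auto
  thus ?thesis using \<open>finite S\<close> by simp
qed

lemma finite_stripe: "finite (stripe_idx N m1 n0 j)"
  unfolding stripe_idx_def by (rule finite_chan) auto

lemma finite_patch: "finite (patch_idx N m n j)"
  unfolding patch_idx_def by (rule finite_chan) auto

lemma cross_bound:
  assumes "n0 \<le> N" "0 < m1" "a < N*m1" and Gm: "\<forall>b<N*m1. \<bar>G b\<bar> \<le> Gm"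
  shows "\<bar>\<Sum>b\<in>{..<N*m1}-{a}. (\<Sum>i<N. conv_dict N n0 m1 f i a * conv_dict N n0 m1 f i b) * G b\<bar>
     \<le> coherence N (N*m1) (conv_dict N n0 m1 f) * Gm
        * card ({b \<in> stripe_idx N m1 n0 (a div m1). G b \<noteq> 0} - {a})"
proof -
  define D where "D = conv_dict N n0 m1 f"
  define M where "M = N*m1"
  define T where "T = {b \<in> stripe_idx N m1 n0 (a div m1). G b \<noteq> 0} - {a}"
  define mu where "mu = coherence N M D"
  have N0: "0 < N" using assms(3) by (cases N) auto
  have TM: "T \<subseteq> {..<M}-{a}" unfolding T_def M_def using stripe_sub[OF N0] by blast
  have finT: "finite T" unfolding T_def using finite_stripe by auto
  have zero: "(\<Sum>i<N. D i a * D i b) * G b = 0" if "b \<in> {..<M}-{a} - T" for b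
  proof (cases "G b = 0")
    case False
    hence "b \<notin> stripe_idx N m1 n0 (a div m1)" using that unfolding T_def by auto
    hence "D i a * D i b = 0" if "i < N" for i
      using stripe_mem[OF assms(1,2,3), of b i f] \<open>b \<in> {..<M}-{a} - T\<close> that
      unfolding D_def M_def by auto
    hence "(\<Sum>i<N. D i a * D i b) = 0" by (intro sum.neutral) auto
    thus ?thesis by simp
  qed simp
  have "\<bar>\<Sum>b\<in>{..<M}-{a}. (\<Sum>i<N. D i a * D i b) * G b\<bar>
      = \<bar>\<Sum>b\<in>T. (\<Sum>i<N. D i a * D i b) * G b\<bar>"
    by (subst sum.mono_neutral_right[OF _ TM]) (use zero in auto)
  also have "\<dots> \<le> (\<Sum>b\<in>T. \<bar>(\<Sum>i<N. D i a * D i b) * G b\<bar>)" by (rule sum_abs)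
  also have "\<dots> \<le> (\<Sum>b\<in>T. mu * Gm)"
  proof (rule sum_mono)
    fix b assume bT: "b \<in> T"
    have "\<bar>\<Sum>i<N. D i a * D i b\<bar> \<le> mu" unfolding mu_def
      by (rule coh_bound) (use bT TM assms(3) M_def in auto)
    moreover have "\<bar>G b\<bar> \<le> Gm" using Gm bT TM M_def by auto
    ultimately show "\<bar>(\<Sum>i<N. D i a * D i b) * G b\<bar> \<le> mu * Gm"
      by (simp add: abs_mult mult_mono coh_nonneg mu_def)
  qed
  also have "\<dots> = mu * Gm * card T" by simp
  finally show ?thesis unfolding D_def M_def T_def mu_def by simp
qed



theorem lemma1:
  fixes N n0 n1 m1 :: nat
    and f :: "nat \<Rightarrow> nat \<Rightarrow> real"
    and Gamma E :: "nat \<Rightarrow> real"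
    and eps0 beta1 :: real
  assumes "1 \<le> n0" and "n0 \<le> N" and "1 \<le> m1" and "1 \<le> n1"
    and unit_cols: "\<forall>a < N * m1. (\<Sum>i<N. (conv_dict N n0 m1 f i a)\<^sup>2) = 1"
    and nonzero: "\<exists>a < N * m1. Gamma a \<noteq> 0"
    and noise: "norm2_inf_patch N 1 n0 E \<le> eps0"
    and cond_a: "real (norm0_inf_stripe N m1 n0 Gamma) <
        1/2 * (1 + 1 / coherence N (N * m1) (conv_dict N n0 m1 f)
               * (Min {\<bar>Gamma a\<bar> | a. a < N * m1 \<and> Gamma a \<noteq> 0}
                  / Max {\<bar>Gamma a\<bar> | a. a < N * m1 \<and> Gamma a \<noteq> 0}))
        - 1 / coherence N (N * m1) (conv_dict N n0 m1 f)
          * (eps0 / Max {\<bar>Gamma a\<bar> | a. a < N * m1 \<and> Gamma a \<noteq> 0})"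
    and cond_b1: "Min {\<bar>Gamma a\<bar> | a. a < N * m1 \<and> Gamma a \<noteq> 0}
        - (real (norm0_inf_stripe N m1 n0 Gamma) - 1) * coherence N (N * m1) (conv_dict N n0 m1 f)
          * Max {\<bar>Gamma a\<bar> | a. a < N * m1 \<and> Gamma a \<noteq> 0} - eps0 > beta1"
    and cond_b2: "beta1 > real (norm0_inf_stripe N m1 n0 Gamma) * coherence N (N * m1) (conv_dict N n0 m1 f)
          * Max {\<bar>Gamma a\<bar> | a. a < N * m1 \<and> Gamma a \<noteq> 0} + eps0"
  shows "{a. a < N * m1 \<and> hard_thr beta1 (matT_vec N (conv_dict N n0 m1 f)
              (\<lambda>i. mat_vec (N * m1) (conv_dict N n0 m1 f) Gamma i + E i)) a \<noteq> 0}
         = {a. a < N * m1 \<and> Gamma a \<noteq> 0}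
     \<and> norm2_inf_patch N m1 n1 (\<lambda>a. Gamma a - hard_thr beta1 (matT_vec N (conv_dict N n0 m1 f)
              (\<lambda>i. mat_vec (N * m1) (conv_dict N n0 m1 f) Gamma i + E i)) a)
       \<le> sqrt (real (norm0_inf_patch N m1 n1 Gamma))
         * (eps0 + coherence N (N * m1) (conv_dict N n0 m1 f)
              * (real (norm0_inf_stripe N m1 n0 Gamma) - 1)
              * Max {\<bar>Gamma a\<bar> | a. a < N * m1 \<and> Gamma a \<noteq> 0})"
proof -
  define D where "D = conv_dict N n0 m1 f"
  define M where "M = N * m1"
  define mu where "mu = coherence N (N * m1) (conv_dict N n0 m1 f)"
  define s where "s = norm0_inf_stripe N m1 n0 Gamma"
  define GS where "GS = {\<bar>Gamma a\<bar> | a. a < N * m1 \<and> Gamma a \<noteq> 0}"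
  define est where "est = matT_vec N (conv_dict N n0 m1 f)
              (\<lambda>i. mat_vec (N * m1) (conv_dict N n0 m1 f) Gamma i + E i)"
  define B where "B = eps0 + mu * (real s - 1) * Max GS"
  have m1: "0 < m1" using assms(3) by simp
  have N0: "0 < N" using assms(1,2) by simp
  have finGS: "finite GS" unfolding GS_def
    by (rule finite_subset[of _ "(\<lambda>a. \<bar>Gamma a\<bar>) ` {..<N*m1}"]) auto
  have neGS: "GS \<noteq> {}" unfolding GS_def using nonzero by auto
  have Gmax: "\<bar>Gamma b\<bar> \<le> Max GS" if "b < N*m1" for b
  proof (cases "Gamma b = 0")
    case True
    obtain x where "x \<in> GS" using neGS by auto
    moreover have "0 \<le> x" using \<open>x \<in> GS\<close> unfolding GS_def by auto
    ultimately have "0 \<le> Max GS" using Max_ge[OF finGS, of x] by linarith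
    thus ?thesis using True by simp
  next
    case False thus ?thesis using that finGS unfolding GS_def by (intro Max_ge) auto
  qed
  have Gmin: "Min GS \<le> \<bar>Gamma b\<bar>" if "b < N*m1" "Gamma b \<noteq> 0" for b
    using that finGS unfolding GS_def by (intro Min_le) auto
  have mu0: "0 \<le> mu" unfolding mu_def by (rule coh_nonneg)
  have GM0: "0 \<le> Max GS" using Gmax[of 0] N0 m1 by (meson abs_ge_zero order_trans mult_pos_pos)
  have eps0: "0 \<le> eps0"
  proof -
    have "sqrt (\<Sum>a\<in>patch_idx N 1 n0 0. (E a)\<^sup>2) \<le> norm2_inf_patch N 1 n0 E"
      unfolding norm2_inf_patch_def by (rule Max_ge) (use N0 in auto)
    moreover have "0 \<le> sqrt (\<Sum>a\<in>patch_idx N 1 n0 0. (E a)\<^sup>2)" by (simp add: sum_nonneg)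
    ultimately show ?thesis using noise by linarith
  qed
  have cardS: "card {b \<in> stripe_idx N m1 n0 (a div m1). Gamma b \<noteq> 0} \<le> s" if "a < N*m1" for a
    unfolding s_def norm0_inf_stripe_def
    by (rule Max_ge) (use that m1 in \<open>auto simp: less_mult_imp_div_less\<close>)
  have self: "a \<in> stripe_idx N m1 n0 (a div m1)" if "a < N*m1" for a
  proof -
    have ka: "a div m1 < N" using that m1 by (simp add: less_mult_imp_div_less)
    have "a div m1 = nat ((int (a div m1) + 0) mod int N)" using ka by simp
    moreover have "(0::int) \<in> {-(int n0 - 1) .. int n0 - 1}" using assms(1) by simp
    ultimately have "a div m1 \<in> (\<lambda>t. nat ((int (a div m1) + t) mod int N)) ` {-(int n0 - 1) .. int n0 - 1}"
      by blast
    moreover have "a = a div m1 * m1 + a mod m1" by simp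
    ultimately show ?thesis unfolding stripe_idx_def chan_idx_def using m1
      by (simp only: mem_Collect_eq) (metis mod_less_divisor)
  qed
  have main: "\<bar>est a - Gamma a\<bar> \<le> mu * Max GS * card ({b \<in> stripe_idx N m1 n0 (a div m1). Gamma b \<noteq> 0} - {a}) + eps0"
    if "a < N*m1" for a
  proof -
    have "est a = Gamma a + (\<Sum>b\<in>{..<N*m1}-{a}. (\<Sum>i<N. conv_dict N n0 m1 f i a * conv_dict N n0 m1 f i b) * Gamma b)
       + (\<Sum>i<N. conv_dict N n0 m1 f i a * E i)"
      unfolding est_def by (rule est_decomp) (use that unit_cols in auto)
    moreover have "\<bar>\<Sum>b\<in>{..<N*m1}-{a}. (\<Sum>i<N. conv_dict N n0 m1 f i a * conv_dict N n0 m1 f i b) * Gamma b\<bar>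
        \<le> mu * Max GS * card ({b \<in> stripe_idx N m1 n0 (a div m1). Gamma b \<noteq> 0} - {a})"
      unfolding mu_def by (rule cross_bound) (use assms(2) m1 that Gmax in auto)
    moreover have "\<bar>\<Sum>i<N. conv_dict N n0 m1 f i a * E i\<bar> \<le> eps0"
      by (rule noise_bound) (use assms(1,2) m1 that unit_cols noise in auto)
    ultimately show ?thesis by linarith
  qed
  have on: "\<bar>est a\<bar> > beta1 \<and> \<bar>Gamma a - est a\<bar> \<le> B" if "a < N*m1" "Gamma a \<noteq> 0" for a
  proof -
    define X where "X = {b \<in> stripe_idx N m1 n0 (a div m1). Gamma b \<noteq> 0}"
    have "finite X" unfolding X_def using finite_stripe by simp
    moreover have "a \<in> X" unfolding X_def using self that by auto
    ultimately have "card (X - {a}) = card X - 1" by simp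
    moreover have "card X \<le> s" "1 \<le> card X" using cardS[OF that(1)] \<open>finite X\<close> \<open>a \<in> X\<close>
      unfolding X_def by (auto simp: Suc_le_eq card_gt_0_iff)
    ultimately have c: "real (card (X - {a})) \<le> real s - 1" by linarith
    have "mu * Max GS * card (X - {a}) \<le> mu * Max GS * (real s - 1)"
      using c mu0 GM0 by (intro mult_left_mono) auto
    hence d: "\<bar>est a - Gamma a\<bar> \<le> mu * Max GS * (real s - 1) + eps0"
      using main[OF that(1)] unfolding X_def by linarith
    have "Min GS \<le> \<bar>Gamma a\<bar>" using Gmin that by auto
    have cb: "Min GS - (real s - 1) * mu * Max GS - eps0 > beta1"
      using cond_b1 unfolding mu_def[symmetric] s_def[symmetric] GS_def[symmetric] .
    have eq: "(real s - 1) * mu * Max GS = mu * Max GS * (real s - 1)" by (simp add: ac_simps)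
    have "\<bar>est a\<bar> > beta1" using d cb eq \<open>Min GS \<le> \<bar>Gamma a\<bar>\<close> by linarith
    moreover have "\<bar>Gamma a - est a\<bar> \<le> B" using d unfolding B_def by (simp add: abs_minus_commute algebra_simps)
    ultimately show ?thesis by simp
  qed
  have off: "\<bar>est a\<bar> < beta1" if "a < N*m1" "Gamma a = 0" for a
  proof -
    have "real (card ({b \<in> stripe_idx N m1 n0 (a div m1). Gamma b \<noteq> 0} - {a})) \<le> real s"
      using cardS[OF that(1)] finite_stripe
      using card_Diff1_le[of "{b \<in> stripe_idx N m1 n0 (a div m1). Gamma b \<noteq> 0}" a] by linarith
    hence "mu * Max GS * card ({b \<in> stripe_idx N m1 n0 (a div m1). Gamma b \<noteq> 0} - {a}) \<le> mu * Max GS * real s"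
      using mu0 GM0 by (intro mult_left_mono) auto
    hence "\<bar>est a\<bar> \<le> mu * Max GS * real s + eps0" using main[OF that(1)] that(2) by simp
    moreover have cb: "beta1 > real s * mu * Max GS + eps0"
      using cond_b2 unfolding mu_def[symmetric] s_def[symmetric] GS_def[symmetric] .
    moreover have eq: "real s * mu * Max GS = mu * Max GS * real s" by (simp add: ac_simps)
    ultimately show ?thesis by linarith
  qed
  have beta0: "0 \<le> beta1" using cond_b2 mu0 GM0 eps0 unfolding mu_def[symmetric] s_def[symmetric] GS_def[symmetric]
    using mult_nonneg_nonneg[OF mult_nonneg_nonneg[OF of_nat_0_le_iff[of s] mu0] GM0] by linarith
  have part1: "{a. a < N * m1 \<and> hard_thr beta1 est a \<noteq> 0} = {a. a < N * m1 \<and> Gamma a \<noteq> 0}"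
  proof (intro set_eqI iffI)
    fix a assume "a \<in> {a. a < N * m1 \<and> hard_thr beta1 est a \<noteq> 0}"
    thus "a \<in> {a. a < N * m1 \<and> Gamma a \<noteq> 0}" using off unfolding hard_thr_def by force
  next
    fix a assume "a \<in> {a. a < N * m1 \<and> Gamma a \<noteq> 0}"
    thus "a \<in> {a. a < N * m1 \<and> hard_thr beta1 est a \<noteq> 0}" using on beta0 unfolding hard_thr_def by force
  qed
  have s1: "1 \<le> s"
  proof -
    obtain a where "a < N*m1" "Gamma a \<noteq> 0" using nonzero by auto
    hence "a \<in> {b \<in> stripe_idx N m1 n0 (a div m1). Gamma b \<noteq> 0}" using self by auto
    hence "1 \<le> card {b \<in> stripe_idx N m1 n0 (a div m1). Gamma b \<noteq> 0}"
    proof -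
      have "finite {b \<in> stripe_idx N m1 n0 (a div m1). Gamma b \<noteq> 0}" using finite_stripe by simp
      thus ?thesis using \<open>a \<in> {b \<in> stripe_idx N m1 n0 (a div m1). Gamma b \<noteq> 0}\<close>
        by (auto simp: Suc_le_eq card_gt_0_iff)
    qed
    thus ?thesis using cardS[OF \<open>a < N*m1\<close>] by simp
  qed
  have B0: "0 \<le> B" unfolding B_def using s1 mu0 GM0 eps0 by (simp add: mult_nonneg_nonneg)
  have diffb1: "\<bar>Gamma a - hard_thr beta1 est a\<bar> \<le> B" if "a < N*m1" for a
  proof (cases "Gamma a = 0")
    case True thus ?thesis using off[OF that] B0 unfolding hard_thr_def by simp
  next
    case False thus ?thesis using on[OF that] unfolding hard_thr_def by simp
  qed
  have diffb2: "Gamma a - hard_thr beta1 est a = 0" if "a < N*m1" "Gamma a = 0" for a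
    using off[OF that] that(2) unfolding hard_thr_def by simp
  have part2: "norm2_inf_patch N m1 n1 (\<lambda>a. Gamma a - hard_thr beta1 est a) \<le> sqrt (real (norm0_inf_patch N m1 n1 Gamma)) * B"
  proof -
  have bnd: "sqrt (\<Sum>a\<in>patch_idx N m1 n1 j. (Gamma a - hard_thr beta1 est a)\<^sup>2) \<le> sqrt (real (norm0_inf_patch N m1 n1 Gamma)) * B"
    if j: "j < N" for j
  proof -
    define P where "P = patch_idx N m1 n1 j"
    define Q where "Q = {a \<in> P. Gamma a \<noteq> 0}"
    have PM: "P \<subseteq> {..<N*m1}" unfolding P_def using patch_sub[OF N0] .
    have finP: "finite P" unfolding P_def by (rule finite_patch)
    have "(\<Sum>a\<in>P. (Gamma a - hard_thr beta1 est a)\<^sup>2) = (\<Sum>a\<in>Q. (Gamma a - hard_thr beta1 est a)\<^sup>2)"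
      by (rule sum.mono_neutral_right) (use finP PM diffb2 in \<open>auto simp: Q_def\<close>)
    also have "\<dots> \<le> (\<Sum>a\<in>Q. B\<^sup>2)"
    proof (rule sum_mono)
      fix a assume "a \<in> Q"
      hence h: "\<bar>Gamma a - hard_thr beta1 est a\<bar> \<le> B" using diffb1 PM Q_def by auto
      show "(Gamma a - hard_thr beta1 est a)\<^sup>2 \<le> B\<^sup>2"
        using power_mono[OF h abs_ge_zero, of 2] by simp
    qed
    also have "\<dots> = card Q * B\<^sup>2" by simp
    also have "\<dots> \<le> real (norm0_inf_patch N m1 n1 Gamma) * B\<^sup>2"
    proof -
      have "card Q \<le> norm0_inf_patch N m1 n1 Gamma" unfolding Q_def P_def norm0_inf_patch_def
        by (rule Max_ge) (use j in auto)
      thus ?thesis by (intro mult_right_mono) auto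
    qed
    finally have "sqrt (\<Sum>a\<in>P. (Gamma a - hard_thr beta1 est a)\<^sup>2) \<le> sqrt (real (norm0_inf_patch N m1 n1 Gamma) * B\<^sup>2)"
      by (rule real_sqrt_le_mono)
    also have "\<dots> = sqrt (real (norm0_inf_patch N m1 n1 Gamma)) * B" using B0 by (simp add: real_sqrt_mult)
    finally show ?thesis unfolding P_def .
  qed
  show ?thesis unfolding norm2_inf_patch_def
    by (subst Max_le_iff) (use bnd N0 in auto)
  qed
  show ?thesis using part1 part2 unfolding est_def B_def mu_def s_def GS_def by (rule conjI)
qed

end
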